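(* Let $\gamma$ be a future-directed timelike curve in $M$. Then every $\bar P\in\bar M$ of the form $\bar P=(I^-[\gamma],P^* )$ is a future endpoint of $\gamma$ in $(\bar M,\bar{\mathcal T})$: every $\bar{\mathcal T}$-open set containing $\bar P$ contains $\Phi$ of some final (future) segment of $\gamma$.
   Context: Let $M$ be a strongly causal spacetime (a time-oriented Lorentzian manifold in which every point has a neighbourhood that no non-spacelike curve enters more than once). $I^\pm(p)$ denotes the chronological future/past of $p\in M$, $I^\pm(S)=\bigcup_{s\in S}I^\pm(s)$, and for a curve $\gamma$ we write $I^\pm[\gamma]=I^\pm(\gamma)$. A past-set is a set $I^-(S)$ with $S\subset M$. An IP is a nonempty past-set that is not the union of two proper subsets which are past-sets. IFs are defined dually. Every set $I^-[\gamma]$ with $\gamma$ timelike is an IP. For an IP $P$, $f(P)=I^+(\{x:P\subset I^-(x)\})$. For an IF $P^*$, $p(P^* )=I^-(\{x:P^*\subset I^+(x)\})$. $R_{pf}$ is the set of pairs $(P,Q^* )$ (with $P$ an IP and $Q^*$ an IF) such that both of the following hold: - $Q^*$ is a maximal IF (under inclusion) contained in $f(P)$; - $P$ is a maximal IP contained in $p(Q^* )$. $\bar M$ is the set of pairs $\bar P=(P,P^* )$ such that one of the following holds: - $(P,P^* )\in R_{pf}$; - $P=\emptyset$ and $P^*$ is an IF occurring in no pair of $R_{pf}$; - $P^*=\emptyset$ and $P$ is an IP occurring in no pair of $R_{pf}$. $\Phi(p)=(I^-(p),I^+(p))$ is an injection $M\to\bar M$. Limits of sets: for past-sets $P_n$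 and $Q$, $Q=\lim P_n$ means both of the following: - (i) each $x\in Q$ lies in $P_n$ for all sufficiently large $n$; - (ii) for each $x\in M$ with $I^-(x)\not\subset Q$, one has $I^-(x)\not\subset P_n$ for all sufficiently large $n$. Limits of future-sets are defined dually. For $\bar S\subset\bar M$ define: - $L^+_{IF}(\bar S)=\{\bar Q:Q^*\ne\emptyset,\ Q^*\subset\bigcup_{\bar P\in\bar S}P^*\}$; - $L^-_{IP}(\bar S)=\{\bar Q:Q\ne\emptyset,\ Q\subset\bigcup_{\bar P\in\bar S}P\}$; - $Cl_{FB}(\bar S)=\bar S\cup\{\bar Q:Q^*=\emptyset,\ Q=\lim P_n\text{ for some sequence }\bar P_n\in\bar S\}$; - $Cl_{PB}(\bar S)=\bar S\cup\{\bar Q:Q=\emptyset,\ Q^*=\lim P_n^*\text{ for some sequence }\bar P_n\in\bar S\}$; - $L^+(\bar S)=Cl_{FB}[\bar S\cup L^+_{IF}(\bar S)]$; - $L^-(\bar S)=Cl_{PB}[\bar S\cup L^-_{IP}(\bar S)]$. $\bar{\mathcal T}$ is the coarsest topology on $\bar M$ in which $\bar M\setminus L^\pm(\bar S)$ are open for every $\bar S\subset\bar M$. *)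

theory Defs
  imports "HOL-Analysis.Analysis"
begin

text \<open>The spacetime M is modelled as a Hausdorff
topological space (the type 'a) together with its chronology relation
chr p q  (meaning  p << q, i.e. q lies in the chronological future of p).\<close>

definition Ipast :: "('a \<Rightarrow> 'a \<Rightarrow> bool) \<Rightarrow> 'a \<Rightarrow> 'a set" where
  "Ipast chr p = {q. chr q p}"

definition Ifut :: "('a \<Rightarrow> 'a \<Rightarrow> bool) \<Rightarrow> 'a \<Rightarrow> 'a set" where
  "Ifut chr p = {q. chr p q}"

definition IpastS :: "('a \<Rightarrow> 'a \<Rightarrow> bool) \<Rightarrow> 'a set \<Rightarrow> 'a set" where
  "IpastS chr S = (\<Union>s\<in>S. Ipast chr s)"

definition IfutS :: "('a \<Rightarrow> 'a \<Rightarrow> bool) \<Rightarrow> 'a set \<Rightarrow> 'a set" where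
  "IfutS chr S = (\<Union>s\<in>S. Ifut chr s)"

definition past_set :: "('a \<Rightarrow> 'a \<Rightarrow> bool) \<Rightarrow> 'a set \<Rightarrow> bool" where
  "past_set chr A \<longleftrightarrow> (\<exists>S. A = IpastS chr S)"

definition future_set :: "('a \<Rightarrow> 'a \<Rightarrow> bool) \<Rightarrow> 'a set \<Rightarrow> bool" where
  "future_set chr A \<longleftrightarrow> (\<exists>S. A = IfutS chr S)"

definition IP :: "('a \<Rightarrow> 'a \<Rightarrow> bool) \<Rightarrow> 'a set \<Rightarrow> bool" where
  "IP chr A \<longleftrightarrow> A \<noteq> {} \<and> past_set chr A \<and>
     \<not> (\<exists>B C. past_set chr B \<and> past_set chr C \<and> B \<subset> A \<and> C \<subset> A \<and> A = B \<union> C)"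

definition IF :: "('a \<Rightarrow> 'a \<Rightarrow> bool) \<Rightarrow> 'a set \<Rightarrow> bool" where
  "IF chr A \<longleftrightarrow> A \<noteq> {} \<and> future_set chr A \<and>
     \<not> (\<exists>B C. future_set chr B \<and> future_set chr C \<and> B \<subset> A \<and> C \<subset> A \<and> A = B \<union> C)"

definition fP :: "('a \<Rightarrow> 'a \<Rightarrow> bool) \<Rightarrow> 'a set \<Rightarrow> 'a set" where
  "fP chr P = IfutS chr {x. P \<subseteq> Ipast chr x}"

definition pF :: "('a \<Rightarrow> 'a \<Rightarrow> bool) \<Rightarrow> 'a set \<Rightarrow> 'a set" where
  "pF chr F = IpastS chr {x. F \<subseteq> Ifut chr x}"

definition Rpf :: "('a \<Rightarrow> 'a \<Rightarrow> bool) \<Rightarrow> ('a set \<times> 'a set) set" where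
  "Rpf chr = {(P, Q). IP chr P \<and> IF chr Q \<and>
      Q \<subseteq> fP chr P \<and> (\<forall>Q'. IF chr Q' \<and> Q' \<subseteq> fP chr P \<and> Q \<subseteq> Q' \<longrightarrow> Q' = Q) \<and>
      P \<subseteq> pF chr Q \<and> (\<forall>P'. IP chr P' \<and> P' \<subseteq> pF chr Q \<and> P \<subseteq> P' \<longrightarrow> P' = P)}"

definition barM :: "('a \<Rightarrow> 'a \<Rightarrow> bool) \<Rightarrow> ('a set \<times> 'a set) set" where
  "barM chr = Rpf chr
     \<union> {(P, F). P = {} \<and> IF chr F \<and> \<not> (\<exists>P'. (P', F) \<in> Rpf chr)}
     \<union> {(P, F). F = {} \<and> IP chr P \<and> \<not> (\<exists>F'. (P, F') \<in> Rpf chr)}"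

definition Phi :: "('a \<Rightarrow> 'a \<Rightarrow> bool) \<Rightarrow> 'a \<Rightarrow> 'a set \<times> 'a set" where
  "Phi chr p = (Ipast chr p, Ifut chr p)"

definition past_lim :: "('a \<Rightarrow> 'a \<Rightarrow> bool) \<Rightarrow> 'a set \<Rightarrow> (nat \<Rightarrow> 'a set) \<Rightarrow> bool" where
  "past_lim chr Q Ps \<longleftrightarrow>
     (\<forall>x\<in>Q. \<forall>\<^sub>F n in sequentially. x \<in> Ps n) \<and>
     (\<forall>x. \<not> Ipast chr x \<subseteq> Q \<longrightarrow> (\<forall>\<^sub>F n in sequentially. \<not> Ipast chr x \<subseteq> Ps n))"

definition fut_lim :: "('a \<Rightarrow> 'a \<Rightarrow> bool) \<Rightarrow> 'a set \<Rightarrow> (nat \<Rightarrow> 'a set) \<Rightarrow> bool" where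
  "fut_lim chr Q Ps \<longleftrightarrow>
     (\<forall>x\<in>Q. \<forall>\<^sub>F n in sequentially. x \<in> Ps n) \<and>
     (\<forall>x. \<not> Ifut chr x \<subseteq> Q \<longrightarrow> (\<forall>\<^sub>F n in sequentially. \<not> Ifut chr x \<subseteq> Ps n))"

definition L_IF :: "('a \<Rightarrow> 'a \<Rightarrow> bool) \<Rightarrow> ('a set \<times> 'a set) set \<Rightarrow> ('a set \<times> 'a set) set" where
  "L_IF chr S = {Q \<in> barM chr. snd Q \<noteq> {} \<and> snd Q \<subseteq> (\<Union>P\<in>S. snd P)}"

definition L_IP :: "('a \<Rightarrow> 'a \<Rightarrow> bool) \<Rightarrow> ('a set \<times> 'a set) set \<Rightarrow> ('a set \<times> 'a set) set" where
  "L_IP chr S = {Q \<in> barM chr. fst Q \<noteq> {} \<and> fst Q \<subseteq> (\<Union>P\<in>S. fst P)}"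

definition Cl_FB :: "('a \<Rightarrow> 'a \<Rightarrow> bool) \<Rightarrow> ('a set \<times> 'a set) set \<Rightarrow> ('a set \<times> 'a set) set" where
  "Cl_FB chr S = S \<union> {Q \<in> barM chr. snd Q = {} \<and>
      (\<exists>Ps. (\<forall>n. Ps n \<in> S) \<and> past_lim chr (fst Q) (\<lambda>n. fst (Ps n)))}"

definition Cl_PB :: "('a \<Rightarrow> 'a \<Rightarrow> bool) \<Rightarrow> ('a set \<times> 'a set) set \<Rightarrow> ('a set \<times> 'a set) set" where
  "Cl_PB chr S = S \<union> {Q \<in> barM chr. fst Q = {} \<and>
      (\<exists>Ps. (\<forall>n. Ps n \<in> S) \<and> fut_lim chr (snd Q) (\<lambda>n. snd (Ps n)))}"

definition Lplus :: "('a \<Rightarrow> 'a \<Rightarrow> bool) \<Rightarrow> ('a set \<times> 'a set) set \<Rightarrow> ('a set \<times> 'a set) set" where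
  "Lplus chr S = Cl_FB chr (S \<union> L_IF chr S)"

definition Lminus :: "('a \<Rightarrow> 'a \<Rightarrow> bool) \<Rightarrow> ('a set \<times> 'a set) set \<Rightarrow> ('a set \<times> 'a set) set" where
  "Lminus chr S = Cl_PB chr (S \<union> L_IP chr S)"

definition barT :: "('a \<Rightarrow> 'a \<Rightarrow> bool) \<Rightarrow> ('a set \<times> 'a set) topology" where
  "barT chr = topology_generated_by
     ({barM chr - Lplus chr S | S. S \<subseteq> barM chr} \<union> {barM chr - Lminus chr S | S. S \<subseteq> barM chr})"

definition strongly_causal_chronology :: "('a::topological_space \<Rightarrow> 'a \<Rightarrow> bool) \<Rightarrow> bool" where
  "strongly_causal_chronology chr \<longleftrightarrow>
     (\<forall>p q r. chr p q \<longrightarrow> chr q r \<longrightarrow> chr p r) \<and>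
     (\<forall>p. \<not> chr p p) \<and>
     (\<forall>p. open (Ipast chr p) \<and> open (Ifut chr p)) \<and>
     (\<forall>p. Ipast chr p \<noteq> {} \<and> Ifut chr p \<noteq> {}) \<and>
     (\<forall>p q. chr p q \<longrightarrow> (\<exists>r. chr p r \<and> chr r q)) \<and>
     \<comment> \<open>strong causality: the Alexandrov sets form a neighbourhood base\<close>
     (\<forall>U p. open U \<and> p \<in> U \<longrightarrow> (\<exists>x y. chr x p \<and> chr p y \<and> Ifut chr x \<inter> Ipast chr y \<subseteq> U)) \<and>
     (\<forall>p. Phi chr p \<in> barM chr) \<and> inj (Phi chr)"

text \<open>Future-directed timelike curve, parametrised on an interval D of reals
without a largest element (so that "future end" makes sense).\<close>
definition fd_timelike_curve :: "('a::topological_space \<Rightarrow> 'a \<Rightarrow> bool) \<Rightarrow> real set \<Rightarrow> (real \<Rightarrow> 'a) \<Rightarrow> bool" where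
  "fd_timelike_curve chr D \<gamma> \<longleftrightarrow>
     is_interval D \<and> D \<noteq> {} \<and> (\<forall>t\<in>D. \<exists>s\<in>D. t < s) \<and>
     continuous_on D \<gamma> \<and> (\<forall>s\<in>D. \<forall>t\<in>D. s < t \<longrightarrow> chr (\<gamma> s) (\<gamma> t))"

end

theory Submission
  imports Defs
begin

lemma b1: fixes D :: "real set" assumes "bdd_above D" "s \<in> D" shows "s \<le> Sup D"
  using assms by (rule cSup_upper[rotated])
lemma b2: fixes D :: "real set" assumes "D \<noteq> {}" "bdd_above D" shows "\<exists>s. s \<in> D \<and> Sup D - 1 / real (Suc n) < s"
proof -
  have "Sup D - 1 / real (Suc n) < Sup D" by simp
  then show ?thesis using less_cSup_iff[OF assms(1) assms(2)] by blast
qed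
lemma b3: fixes D :: "real set" assumes "\<not> bdd_above D" shows "\<exists>s. s \<in> D \<and> real n < s"
  using assms unfolding bdd_above_def by (auto simp: not_le)

lemma cof_bdd:
  fixes D :: "real set"
  assumes "D \<noteq> {}" "\<forall>t\<in>D. \<exists>s\<in>D. t < s" "bdd_above D"
  shows "\<exists>s. (\<forall>n. s n \<in> D) \<and> (\<forall>t\<in>D. eventually (\<lambda>n. t < s n) sequentially)"
proof -
  have tb: "t < Sup D" if tD: "t \<in> D" for t
  proof -
    obtain s where "s \<in> D" "t < s" using bspec[OF assms(2) tD] by blast
    then show ?thesis using b1[OF assms(3), of s] by linarith
  qed
  have "\<forall>n. \<exists>s. s \<in> D \<and> Sup D - 1 / real (Suc n) < s"
    using b2[OF assms(1) assms(3)] by blast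
  then have "\<exists>s. \<forall>n. s n \<in> D \<and> Sup D - 1 / real (Suc n) < s n" by (rule choice)
  then obtain s where s: "\<And>n. s n \<in> D" "\<And>n. Sup D - 1 / real (Suc n) < s n" by blast
  have ev: "eventually (\<lambda>n. t < s n) sequentially" if tD: "t \<in> D" for t
  proof -
    have "0 < Sup D - t" using tb[OF tD] by simp
    then obtain N where N: "inverse (real (Suc N)) < Sup D - t" using reals_Archimedean by blast
    show ?thesis
    proof (rule eventually_sequentiallyI[of N])
      fix n assume "N \<le> n"
      then have "1 / real (Suc n) \<le> 1 / real (Suc N)"
        by (simp add: frac_le)
      then show "t < s n" using s(2)[of n] N by (simp add: inverse_eq_divide)
    qed
  qed
  show ?thesis
    apply (rule exI[of _ s])
    using s(1) ev by simp
qed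

lemma cofinal_seq:
  fixes D :: "real set"
  assumes "D \<noteq> {}" "\<forall>t\<in>D. \<exists>s\<in>D. t < s"
  shows "\<exists>s. (\<forall>n. s n \<in> D) \<and> (\<forall>t\<in>D. eventually (\<lambda>n. t < s n) sequentially)"
proof (cases "bdd_above D")
  case True
  then show ?thesis using cof_bdd[OF assms True] by blast
next
  case False
  have "\<forall>n. \<exists>s. s \<in> D \<and> real n < s" using b3[OF False] by blast
  then have "\<exists>s. \<forall>n. s n \<in> D \<and> real n < s n" by (rule choice)
  then obtain s where s: "\<And>n. s n \<in> D" "\<And>n. real n < s n" by blast
  have ev: "eventually (\<lambda>n. t < s n) sequentially" for t
  proof -
    obtain N where N: "t < real N" using reals_Archimedean2 by blast
    show ?thesis
    proof (rule eventually_sequentiallyI[of N])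
      fix n assume "N \<le> n"
      then show "t < s n" using s(2)[of n] N by (smt (verit) of_nat_le_iff)
    qed
  qed
  show ?thesis
    apply (rule exI[of _ s])
    using s(1) ev by simp
qed

theorem theorem7:
  fixes chr :: "'a::t2_space \<Rightarrow> 'a \<Rightarrow> bool"
    and D :: "real set" and \<gamma> :: "real \<Rightarrow> 'a" and Pbar :: "'a set \<times> 'a set"
  assumes "strongly_causal_chronology chr"
    and "fd_timelike_curve chr D \<gamma>"
    and "Pbar \<in> barM chr"
    and "fst Pbar = IpastS chr (\<gamma> ` D)"
  shows "\<forall>U. openin (barT chr) U \<and> Pbar \<in> U \<longrightarrow>
           (\<exists>t0\<in>D. \<forall>t\<in>D. t0 \<le> t \<longrightarrow> Phi chr (\<gamma> t) \<in> U)"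
proof -
  define G where "G = IpastS chr (\<gamma> ` D)"
  have SC: "(\<forall>p q r. chr p q \<longrightarrow> chr q r \<longrightarrow> chr p r) \<and> (\<forall>p. Ipast chr p \<noteq> {} \<and> Ifut chr p \<noteq> {})
     \<and> (\<forall>p. Phi chr p \<in> barM chr)"
    using assms(1) unfolding strongly_causal_chronology_def by simp
  have tr: "\<And>p q r. chr p q \<Longrightarrow> chr q r \<Longrightarrow> chr p r"
    using SC by simp
  have ne: "\<And>p. Ipast chr p \<noteq> {} \<and> Ifut chr p \<noteq> {}"
    using SC by simp
  have phiM: "\<And>p. Phi chr p \<in> barM chr"
    using SC by simp
  have FD: "D \<noteq> {} \<and> (\<forall>t\<in>D. \<exists>s\<in>D. t < s) \<and> (\<forall>s\<in>D. \<forall>t\<in>D. s < t \<longrightarrow> chr (\<gamma> s) (\<gamma> t))"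
    using assms(2) unfolding fd_timelike_curve_def by simp
  have Dne: "D \<noteq> {}" and Dmax: "\<forall>t\<in>D. \<exists>s\<in>D. t < s"
    using FD by simp_all
  have mono: "\<And>s t. s \<in> D \<Longrightarrow> t \<in> D \<Longrightarrow> s < t \<Longrightarrow> chr (\<gamma> s) (\<gamma> t)"
    using FD by simp
  have key1: "Ipast chr (\<gamma> t) \<subseteq> G" if tD: "t \<in> D" for t
  proof
    fix y assume "y \<in> Ipast chr (\<gamma> t)"
    obtain s where "s \<in> D" "t < s" using bspec[OF Dmax tD] by blast
    then have c1: "chr (\<gamma> t) (\<gamma> s)" using mono[OF tD] by blast
    have y: "chr y (\<gamma> t)" using \<open>y \<in> Ipast chr (\<gamma> t)\<close> by (simp add: Ipast_def)
    have "chr y (\<gamma> s)" by (rule tr[OF y c1])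
    then show "y \<in> G" unfolding G_def IpastS_def Ipast_def using \<open>s \<in> D\<close> by blast
  qed
  have key2: "\<gamma> t \<in> G" if tD: "t \<in> D" for t
  proof -
    obtain s where "s \<in> D" "t < s" using bspec[OF Dmax tD] by blast
    then show ?thesis using mono[OF tD] unfolding G_def IpastS_def Ipast_def by blast
  qed
  have Gne: "G \<noteq> {}" using key2 Dne by blast
  have fPb: "fst Pbar = G" using assms(4) G_def by simp
  define Ev where "Ev A \<longleftrightarrow> (\<exists>t0\<in>D. \<forall>t\<in>D. t0 \<le> t \<longrightarrow> Phi chr (\<gamma> t) \<in> A)" for A
  have negEv: "\<forall>t0\<in>D. \<exists>t\<in>D. t0 \<le> t \<and> Phi chr (\<gamma> t) \<in> Lplus chr S"
    if "\<not> Ev (barM chr - Lplus chr S)" for S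
    using that phiM unfolding Ev_def by blast
  have negEv2: "\<forall>t0\<in>D. \<exists>t\<in>D. t0 \<le> t \<and> Phi chr (\<gamma> t) \<in> Lminus chr S"
    if "\<not> Ev (barM chr - Lminus chr S)" for S
    using that phiM unfolding Ev_def by blast
  have basis_plus: "Ev (barM chr - Lplus chr S)" if nP: "Pbar \<notin> Lplus chr S" for S
  proof (rule ccontr)
    assume "\<not> Ev (barM chr - Lplus chr S)"
    note H = negEv[OF this]
    have A: "Phi chr (\<gamma> t) \<in> S \<union> L_IF chr S" if "Phi chr (\<gamma> t) \<in> Lplus chr S" for t
      using that ne unfolding Lplus_def Cl_FB_def Phi_def by auto
    have B: "Ifut chr (\<gamma> t) \<subseteq> (\<Union>P\<in>S. snd P)" if "Phi chr (\<gamma> t) \<in> S \<union> L_IF chr S" for t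
      using that unfolding L_IF_def Phi_def by force
    show False
    proof (cases "snd Pbar = {}")
      case False
      have "Pbar \<in> Rpf chr"
        using assms(3) False fPb Gne unfolding barM_def by auto
      then have sub: "snd Pbar \<subseteq> fP chr G"
        using fPb unfolding Rpf_def by (cases Pbar) auto
      obtain t0 where "t0 \<in> D" using Dne by blast
      then obtain t where t: "t \<in> D" "Phi chr (\<gamma> t) \<in> Lplus chr S" using H by blast
      have "snd Pbar \<subseteq> Ifut chr (\<gamma> t)"
      proof
        fix y assume "y \<in> snd Pbar"
        then obtain x where "G \<subseteq> Ipast chr x" "chr x y"
          using sub unfolding fP_def IfutS_def Ifut_def by blast
        then have "chr (\<gamma> t) x" using key2[OF t(1)] unfolding Ipast_def by blast
        then have "chr (\<gamma> t) y" using \<open>chr x y\<close> by (rule tr)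
        then show "y \<in> Ifut chr (\<gamma> t)" unfolding Ifut_def by simp
      qed
      then have "Pbar \<in> L_IF chr S"
        using B[OF A[OF t(2)]] assms(3) False unfolding L_IF_def by blast
      then show False using nP unfolding Lplus_def Cl_FB_def by blast
    next
      case True
      obtain s where s: "\<forall>n. s n \<in> D" "\<forall>t\<in>D. eventually (\<lambda>n. t < s n) sequentially"
        using cofinal_seq[OF Dne Dmax] by blast
      have "\<forall>n. \<exists>t. t \<in> D \<and> s n \<le> t \<and> Phi chr (\<gamma> t) \<in> Lplus chr S"
        using H s(1) by blast
      then have "\<exists>tt. \<forall>n. tt n \<in> D \<and> s n \<le> tt n \<and> Phi chr (\<gamma> (tt n)) \<in> Lplus chr S"
        by (rule choice)
      then obtain tt where tt: "\<forall>n. tt n \<in> D \<and> s n \<le> tt n \<and> Phi chr (\<gamma> (tt n)) \<in> Lplus chr S"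
        by blast
      define Ps where "Ps n = Phi chr (\<gamma> (tt n))" for n
      have PsS: "\<forall>n. Ps n \<in> S \<union> L_IF chr S" using A tt unfolding Ps_def by blast
      have lim: "past_lim chr G (\<lambda>n. fst (Ps n))"
        unfolding past_lim_def
      proof (intro conjI ballI allI impI)
        fix x assume "x \<in> G"
        then obtain u where u: "u \<in> D" "chr x (\<gamma> u)"
          unfolding G_def IpastS_def Ipast_def by blast
        show "\<forall>\<^sub>F n in sequentially. x \<in> fst (Ps n)"
          using s(2)[rule_format, OF u(1)]
        proof (rule eventually_mono)
          fix n assume "u < s n"
          then have "u < tt n" using tt by (meson less_le_trans)
          then have "chr (\<gamma> u) (\<gamma> (tt n))" using mono u(1) tt by blast
          with u(2) have "chr x (\<gamma> (tt n))" by (rule tr)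
          then show "x \<in> fst (Ps n)" unfolding Ps_def Phi_def Ipast_def by simp
        qed
      next
        fix x assume "\<not> Ipast chr x \<subseteq> G"
        then show "\<forall>\<^sub>F n in sequentially. \<not> Ipast chr x \<subseteq> fst (Ps n)"
          using key1 tt unfolding Ps_def Phi_def by (auto intro!: always_eventually)
      qed
      have "Pbar \<in> Cl_FB chr (S \<union> L_IF chr S)"
        unfolding Cl_FB_def using assms(3) True fPb PsS lim by blast
      then show False using nP unfolding Lplus_def by blast
    qed
  qed
  have basis_minus: "Ev (barM chr - Lminus chr S)" if nP: "Pbar \<notin> Lminus chr S" for S
  proof (rule ccontr)
    assume "\<not> Ev (barM chr - Lminus chr S)"
    note H = negEv2[OF this]
    have A: "Ipast chr (\<gamma> t) \<subseteq> (\<Union>P\<in>S. fst P)" if "Phi chr (\<gamma> t) \<in> Lminus chr S" for t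
    proof -
      have "Phi chr (\<gamma> t) \<in> S \<union> L_IP chr S"
        using that ne unfolding Lminus_def Cl_PB_def Phi_def by auto
      then show ?thesis unfolding L_IP_def Phi_def by force
    qed
    have "G \<subseteq> (\<Union>P\<in>S. fst P)"
    proof
      fix x assume "x \<in> G"
      then obtain u where u: "u \<in> D" "chr x (\<gamma> u)"
        unfolding G_def IpastS_def Ipast_def by blast
      then obtain t where t: "t \<in> D" "u \<le> t" "Phi chr (\<gamma> t) \<in> Lminus chr S" using H by blast
      have "chr x (\<gamma> t)"
      proof (cases "u = t")
        case True then show ?thesis using u by simp
      next
        case False
        then have "u < t" using t(2) by simp
        then have "chr (\<gamma> u) (\<gamma> t)" using mono[OF u(1) t(1)] by simp
        with u(2) show ?thesis by (rule tr)
      qed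
      then show "x \<in> (\<Union>P\<in>S. fst P)" using A[OF t(3)] unfolding Ipast_def by blast
    qed
    then have "Pbar \<in> L_IP chr S" using assms(3) fPb Gne unfolding L_IP_def by blast
    then show False using nP unfolding Lminus_def Cl_PB_def by blast
  qed
  have main: "generate_topology_on
     ({barM chr - Lplus chr S | S. S \<subseteq> barM chr} \<union> {barM chr - Lminus chr S | S. S \<subseteq> barM chr}) U
     \<Longrightarrow> Pbar \<in> U \<Longrightarrow> Ev U" for U
  proof (induction rule: generate_topology_on.induct)
    case Empty
    then show ?case by simp
  next
    case (Int a b)
    then obtain t1 t2 where t: "t1 \<in> D" "\<forall>t\<in>D. t1 \<le> t \<longrightarrow> Phi chr (\<gamma> t) \<in> a"
      "t2 \<in> D" "\<forall>t\<in>D. t2 \<le> t \<longrightarrow> Phi chr (\<gamma> t) \<in> b" unfolding Ev_def by auto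
    show ?case unfolding Ev_def
      by (rule bexI[of _ "max t1 t2"]) (use t in \<open>auto simp: max_def\<close>)
  next
    case (UN K)
    then obtain k where "k \<in> K" "Pbar \<in> k" by blast
    then have "Ev k" using UN by blast
    then show ?case using \<open>k \<in> K\<close> unfolding Ev_def by blast
  next
    case (Basis s)
    then show ?case using basis_plus basis_minus by blast
  qed
  show ?thesis
    using main unfolding barT_def openin_topology_generated_by_iff Ev_def by blast
qed

end
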